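(* Let $f_1,\dots,f_n:\mathbb{R}^d\to\mathbb{R}$ be such that each $f_i$ is $L_i$-smooth and $\mu_i$-strongly convex, with minimizer $x_i$. Let $\alpha_1,\dots,\alpha_n\in(0,1)$, $\tilde f(x) = \frac{1}{n}\sum_{i=1}^n f_i(\alpha_i x + (1-\alpha_i)x_i)$, $\hat L = \frac{1}{n}\sum_i L_i$, $\hat\mu = \frac{1}{n}\sum_i \mu_i$, $L_\alpha = \frac{1}{n}\sum_i \alpha_i^2 L_i$, $\mu_\alpha = \frac{1}{n}\sum_i\alpha_i^2\mu_i$, $w_i = \frac{\alpha_i^2 L_i}{nL_\alpha}$, $x^{\mathrm{avg}} = \sum_i w_i x_i$, $D = \max_{i\neq j}\|x_i-x_j\|^2$ and $V = \sum_i w_i\|x_i - x^{\mathrm{avg}}\|^2$. Run distributed gradient descent $x^{k+1} = x^k - \frac{\gamma}{n}\sum_{i=1}^n \alpha_i \nabla f_i(\alpha_i x^k + (1-\alpha_i)x_i)$ with stepsize $\gamma = 1/L_\alpha$, starting from $x^0 = x^{\mathrm{avg}}$. Then for every $K \geq 0$: (i) with $\alpha_{\max} = \max_i \alpha_i$, $\tilde f(x^K) - \min_x \tilde f(x) \leq \left(1 - \frac{\mu_\alpha}{L_\alpha}\right)^K \frac{\alpha_{\max}^2 \hat L D}{2}$; (ii) if $\alpha_i = \beta$ for all $i$, then $\tilde f(x^K) - \min_x\tilde f(x) \leq \left(1 - \frac{\hat\mu}{\hat L}\right)^K \frac{\beta^2\hat L V}{2}$.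
   Context: A differentiable $g$ is $L$-smooth if $\|\nabla g(x)-\nabla g(y)\|\leq L\|x-y\|$ for all $x,y$, and $\mu$-strongly convex if $g(x)\geq g(y)+\langle\nabla g(y),x-y\rangle+\frac{\mu}{2}\|x-y\|^2$ for all $x,y$. *)

theory Defs
  imports "HOL-Analysis.Analysis"
begin

definition is_gradient :: "('a::real_inner \<Rightarrow> real) \<Rightarrow> ('a \<Rightarrow> 'a) \<Rightarrow> bool" where
  "is_gradient f g \<longleftrightarrow> (\<forall>x. (f has_derivative (\<lambda>h. g x \<bullet> h)) (at x))"

definition L_smooth :: "real \<Rightarrow> ('a::real_inner \<Rightarrow> real) \<Rightarrow> ('a \<Rightarrow> 'a) \<Rightarrow> bool" where
  "L_smooth L f g \<longleftrightarrow> is_gradient f g \<and> (\<forall>x y. norm (g x - g y) \<le> L * norm (x - y))"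

definition strongly_convex :: "real \<Rightarrow> ('a::real_inner \<Rightarrow> real) \<Rightarrow> ('a \<Rightarrow> 'a) \<Rightarrow> bool" where
  "strongly_convex \<mu> f g \<longleftrightarrow> is_gradient f g \<and>
     (\<forall>x y. f x \<ge> f y + g y \<bullet> (x - y) + \<mu> / 2 * (norm (x - y))\<^sup>2)"

end

theory Submission
  imports Defs
begin

lemma descent:
  fixes F :: "'a::real_inner \<Rightarrow> real"
  assumes gr: "is_gradient F G" and lip: "\<forall>x y. norm (G x - G y) \<le> L * norm (x - y)"
  shows "F y \<le> F x + G x \<bullet> (y - x) + L / 2 * (norm (y - x))\<^sup>2"
proof -
  define h where "h = y - x"
  define \<phi> where "\<phi> = (\<lambda>t::real. F (x + t *\<^sub>R h) - t * (G x \<bullet> h) - L / 2 * t\<^sup>2 * (norm h)\<^sup>2)"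
  have d: "DERIV \<phi> t :> (G (x + t *\<^sub>R h) \<bullet> h - G x \<bullet> h - L * t * (norm h)\<^sup>2)" for t
  proof -
    have a: "((\<lambda>t. x + t *\<^sub>R h) has_derivative (\<lambda>s. s *\<^sub>R h)) (at t)"
      by (auto intro!: derivative_eq_intros)
    have b: "(F has_derivative (\<lambda>k. G (x + t *\<^sub>R h) \<bullet> k)) (at (x + t *\<^sub>R h))"
      using gr unfolding is_gradient_def by blast
    have c: "((\<lambda>t. F (x + t *\<^sub>R h)) has_derivative (\<lambda>s. G (x + t *\<^sub>R h) \<bullet> (s *\<^sub>R h))) (at t)"
      using has_derivative_compose[OF a b] .
    have c': "((\<lambda>t. F (x + t *\<^sub>R h)) has_derivative (\<lambda>s. (G (x + t *\<^sub>R h) \<bullet> h) * s)) (at t)"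
      using c by (simp add: mult.commute)
    have "DERIV (\<lambda>t. F (x + t *\<^sub>R h)) t :> G (x + t *\<^sub>R h) \<bullet> h"
      using c' unfolding has_field_derivative_def by simp
    then show ?thesis unfolding \<phi>_def
      by (auto intro!: derivative_eq_intros)
  qed
  have "\<phi> 1 \<le> \<phi> 0"
  proof (rule DERIV_nonpos_imp_nonincreasing[of 0 1 \<phi>])
    fix t :: real assume t: "0 \<le> t" "t \<le> 1"
    have "(G (x + t *\<^sub>R h) - G x) \<bullet> h \<le> norm (G (x + t *\<^sub>R h) - G x) * norm h"
      by (rule norm_cauchy_schwarz)
    also have "\<dots> \<le> L * norm (t *\<^sub>R h) * norm h"
      using lip[rule_format, of "x + t *\<^sub>R h" x] by (simp add: mult_right_mono)
    also have "\<dots> = L * t * (norm h)\<^sup>2" using t by (simp add: power2_eq_square)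
    finally have "G (x + t *\<^sub>R h) \<bullet> h - G x \<bullet> h - L * t * (norm h)\<^sup>2 \<le> 0"
      by (simp add: inner_diff_left)
    then show "\<exists>y. DERIV \<phi> t :> y \<and> y \<le> 0" using d by blast
  qed simp
  then show ?thesis unfolding \<phi>_def h_def by simp
qed

lemma gd_step:
  fixes F :: "'a::real_inner \<Rightarrow> real"
  assumes gr: "is_gradient F G" and lip: "\<forall>x y. norm (G x - G y) \<le> L * norm (x - y)"
    and sc: "\<forall>x y. F x \<ge> F y + G y \<bullet> (x - y) + \<mu> / 2 * (norm (x - y))\<^sup>2"
    and L: "L > 0" and mu: "\<mu> > 0"
  shows "F (x - (1 / L) *\<^sub>R G x) - (INF y. F y) \<le> (1 - \<mu> / L) * (F x - (INF y. F y))"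
proof -
  have desc: "F (x - (1 / L) *\<^sub>R G x) \<le> F x - (norm (G x))\<^sup>2 / (2 * L)"
  proof -
    have "F (x - (1 / L) *\<^sub>R G x) \<le> F x + G x \<bullet> ((x - (1 / L) *\<^sub>R G x) - x) + L / 2 * (norm ((x - (1 / L) *\<^sub>R G x) - x))\<^sup>2"
      by (rule descent[OF gr lip])
    also have "\<dots> = F x - (norm (G x))\<^sup>2 / (2 * L)"
      using L by (simp add: power2_norm_eq_inner field_simps) (simp add: power2_eq_square)
    finally show ?thesis .
  qed
  have pl: "F x - (norm (G x))\<^sup>2 / (2 * \<mu>) \<le> (INF y. F y)"
  proof (rule cINF_greatest)
    fix y
    have "0 \<le> (norm (G x + \<mu> *\<^sub>R (y - x)))\<^sup>2" by simp
    also have "\<dots> = (norm (G x))\<^sup>2 + 2 * \<mu> * (G x \<bullet> (y - x)) + \<mu>\<^sup>2 * (norm (y - x))\<^sup>2"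
      by (simp only: power2_norm_eq_inner) (simp add: inner_add_left inner_add_right power2_eq_square inner_commute algebra_simps)
    finally have "- (norm (G x))\<^sup>2 / (2 * \<mu>) \<le> G x \<bullet> (y - x) + \<mu> / 2 * (norm (y - x))\<^sup>2"
      using mu by (simp add: field_simps power2_eq_square)
    with sc[rule_format, of x y] show "F x - (norm (G x))\<^sup>2 / (2 * \<mu>) \<le> F y" by linarith
  qed simp
  have "(norm (G x))\<^sup>2 / (2 * L) = (\<mu> / L) * ((norm (G x))\<^sup>2 / (2 * \<mu>))"
    using mu L by (simp add: field_simps)
  also have "\<dots> \<ge> (\<mu> / L) * (F x - (INF y. F y))"
    using pl mu L by (intro mult_left_mono) auto
  finally show ?thesis using desc by (simp add: algebra_simps)
qed

lemma mu_le_L: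
  fixes F :: "'a::euclidean_space \<Rightarrow> real"
  assumes lip: "\<forall>x y. norm (G x - G y) \<le> L * norm (x - y)"
    and sc: "\<forall>x y. F x \<ge> F y + G y \<bullet> (x - y) + \<mu> / 2 * (norm (x - y))\<^sup>2"
  shows "\<mu> \<le> L"
proof -
  obtain b :: 'a where b: "b \<in> Basis" using nonempty_Basis by blast
  then have nb: "norm b = 1" by simp
  have "\<mu> \<le> (G b - G 0) \<bullet> b"
    using sc[rule_format, of b 0] sc[rule_format, of 0 b] nb by (simp add: inner_diff_left)
  also have "\<dots> \<le> norm (G b - G 0) * norm b" by (rule norm_cauchy_schwarz)
  also have "\<dots> \<le> L" using lip[rule_format, of b 0] nb by simp
  finally show ?thesis .
qed

theorem theorem2:
  fixes n :: nat
    and f :: "nat \<Rightarrow> 'a::euclidean_space \<Rightarrow> real"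
    and g :: "nat \<Rightarrow> 'a \<Rightarrow> 'a"
    and L \<mu> \<alpha> :: "nat \<Rightarrow> real"
    and xs :: "nat \<Rightarrow> 'a"
    and xk :: "nat \<Rightarrow> 'a"
    and \<beta> :: real
    and K :: nat
    and ftil :: "'a \<Rightarrow> real"
    and Lhat muhat La mua D V \<gamma> amax :: real
    and w :: "nat \<Rightarrow> real"
    and xavg :: 'a
  assumes ftil_def: "ftil = (\<lambda>x. (1 / real n) * (\<Sum>i<n. f i (\<alpha> i *\<^sub>R x + (1 - \<alpha> i) *\<^sub>R xs i)))"
    and Lhat_def: "Lhat = (1 / real n) * (\<Sum>i<n. L i)"
    and muhat_def: "muhat = (1 / real n) * (\<Sum>i<n. \<mu> i)"
    and La_def: "La = (1 / real n) * (\<Sum>i<n. (\<alpha> i)\<^sup>2 * L i)"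
    and mua_def: "mua = (1 / real n) * (\<Sum>i<n. (\<alpha> i)\<^sup>2 * \<mu> i)"
    and w_def: "w = (\<lambda>i. (\<alpha> i)\<^sup>2 * L i / (real n * La))"
    and xavg_def: "xavg = (\<Sum>i<n. w i *\<^sub>R xs i)"
    and D_def: "D = Max (insert 0 {(norm (xs i - xs j))\<^sup>2 | i j. i < n \<and> j < n \<and> i \<noteq> j})"
    and V_def: "V = (\<Sum>i<n. w i * (norm (xs i - xavg))\<^sup>2)"
    and gamma_def: "\<gamma> = 1 / La"
    and amax_def: "amax = Max (\<alpha> ` {..<n})"
    and n_pos: "n \<ge> 1"
    and smooth: "\<And>i. i < n \<Longrightarrow> L_smooth (L i) (f i) (g i)"
    and sconvex: "\<And>i. i < n \<Longrightarrow> strongly_convex (\<mu> i) (f i) (g i)"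
    and mu_pos: "\<And>i. i < n \<Longrightarrow> \<mu> i > 0"
    and minimizer: "\<And>i y. i < n \<Longrightarrow> f i (xs i) \<le> f i y"
    and alpha_range: "\<And>i. i < n \<Longrightarrow> 0 < \<alpha> i \<and> \<alpha> i < 1"
    and x0: "xk 0 = xavg"
    and step: "\<And>k. xk (Suc k) = xk k - (\<gamma> / real n) *\<^sub>R
                 (\<Sum>i<n. \<alpha> i *\<^sub>R g i (\<alpha> i *\<^sub>R xk k + (1 - \<alpha> i) *\<^sub>R xs i))"
  shows "ftil (xk K) - (INF x. ftil x) \<le> (1 - mua / La) ^ K * (amax\<^sup>2 * Lhat * D / 2)
         \<and> ((\<forall>i<n. \<alpha> i = \<beta>) \<longrightarrow>
           ftil (xk K) - (INF x. ftil x) \<le> (1 - muhat / Lhat) ^ K * (\<beta>\<^sup>2 * Lhat * V / 2))"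
proof -
  define Y where "Y = (\<lambda>i x. \<alpha> i *\<^sub>R x + (1 - \<alpha> i) *\<^sub>R xs i)"
  define Gt where "Gt = (\<lambda>x. (1 / real n) *\<^sub>R (\<Sum>i<n. \<alpha> i *\<^sub>R g i (Y i x)))"
  have nR: "real n > 0" using n_pos by simp
  have ftilY: "ftil x = (1 / real n) * (\<Sum>i<n. f i (Y i x))" for x
    by (simp add: ftil_def Y_def)
  have YD: "Y i x - Y i y = \<alpha> i *\<^sub>R (x - y)" for i x y
    by (simp add: Y_def algebra_simps)
  have gradi: "is_gradient (f i) (g i)" if "i < n" for i
    using smooth[OF that] unfolding L_smooth_def by blast
  have lipi: "\<forall>x y. norm (g i x - g i y) \<le> L i * norm (x - y)" if "i < n" for i
    using smooth[OF that] unfolding L_smooth_def by blast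
  have sci: "\<forall>x y. f i x \<ge> f i y + g i y \<bullet> (x - y) + \<mu> i / 2 * (norm (x - y))\<^sup>2" if "i < n" for i
    using sconvex[OF that] unfolding strongly_convex_def by blast
  have muL: "\<mu> i \<le> L i" if "i < n" for i
    by (rule mu_le_L[OF lipi[OF that] sci[OF that]])
  have Lpos: "L i > 0" if "i < n" for i using muL[OF that] mu_pos[OF that] by linarith
  have apos: "\<alpha> i > 0" if "i < n" for i using alpha_range[OF that] by blast
  have sum_pos: "(\<Sum>i<n. (\<alpha> i)\<^sup>2 * \<mu> i) > 0"
    proof (rule sum_pos)
    have "0 \<in> {..<n}" using n_pos by simp
    then show "{..<n} \<noteq> {}" by blast
    fix i assume "i \<in> {..<n}"
    then have "i < n" by simp
    then show "(\<alpha> i)\<^sup>2 * \<mu> i > 0" using apos[of i] mu_pos[of i] by (intro mult_pos_pos) auto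
  qed simp
  have mua_pos: "mua > 0" unfolding mua_def using sum_pos nR by simp
  have mua_le: "mua \<le> La" unfolding mua_def La_def using nR
    by (intro mult_left_mono sum_mono) (auto intro!: mult_left_mono muL)
  have La_pos: "La > 0" using mua_pos mua_le by linarith
  have fe: "ftil = (\<lambda>x. (1 / real n) * (\<Sum>i<n. f i (Y i x)))"
    using ftilY by (simp add: fun_eq_iff)
  have gradt: "is_gradient ftil Gt"
    unfolding is_gradient_def
  proof
    fix x
    have "((\<lambda>x. (1 / real n) * (\<Sum>i<n. f i (Y i x))) has_derivative
          (\<lambda>h. (1 / real n) * (\<Sum>i<n. g i (Y i x) \<bullet> (\<alpha> i *\<^sub>R h)))) (at x)"
    proof (intro has_derivative_mult_right has_derivative_sum)
      fix i assume "i \<in> {..<n}"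
      then have i: "i < n" by simp
      have a: "(Y i has_derivative (\<lambda>h. \<alpha> i *\<^sub>R h)) (at x)"
        unfolding Y_def by (auto intro!: derivative_eq_intros)
      have b: "(f i has_derivative (\<lambda>k. g i (Y i x) \<bullet> k)) (at (Y i x))"
        using gradi[OF i] unfolding is_gradient_def by blast
      show "((\<lambda>x. f i (Y i x)) has_derivative (\<lambda>h. g i (Y i x) \<bullet> (\<alpha> i *\<^sub>R h))) (at x)"
        using has_derivative_compose[OF a b] .
    qed
    moreover have "(\<lambda>h. (1 / real n) * (\<Sum>i<n. g i (Y i x) \<bullet> (\<alpha> i *\<^sub>R h))) = (\<lambda>h. Gt x \<bullet> h)"
      by (auto simp: Gt_def inner_sum_left)
    ultimately show "(ftil has_derivative (\<lambda>h. Gt x \<bullet> h)) (at x)"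
      unfolding fe by simp
  qed
  have lipt: "\<forall>x y. norm (Gt x - Gt y) \<le> La * norm (x - y)"
  proof (intro allI)
    fix x y
    have "Gt x - Gt y = (1 / real n) *\<^sub>R (\<Sum>i<n. \<alpha> i *\<^sub>R (g i (Y i x) - g i (Y i y)))"
    proof -
      have "(\<Sum>i<n. \<alpha> i *\<^sub>R (g i (Y i x) - g i (Y i y))) = (\<Sum>i<n. \<alpha> i *\<^sub>R g i (Y i x)) - (\<Sum>i<n. \<alpha> i *\<^sub>R g i (Y i y))"
        by (simp add: scaleR_diff_right sum_subtractf)
      then show ?thesis by (simp only: Gt_def scaleR_diff_right)
    qed
    then have "norm (Gt x - Gt y) = (1 / real n) * norm (\<Sum>i<n. \<alpha> i *\<^sub>R (g i (Y i x) - g i (Y i y)))"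
      using nR by simp
    also have "\<dots> \<le> (1 / real n) * (\<Sum>i<n. norm (\<alpha> i *\<^sub>R (g i (Y i x) - g i (Y i y))))"
      using nR by (intro mult_left_mono norm_sum) auto
    also have "\<dots> \<le> (1 / real n) * (\<Sum>i<n. (\<alpha> i)\<^sup>2 * L i * norm (x - y))"
    proof (intro mult_left_mono sum_mono)
      fix i assume "i \<in> {..<n}"
      then have i: "i < n" by simp
      have "norm (\<alpha> i *\<^sub>R (g i (Y i x) - g i (Y i y))) = \<alpha> i * norm (g i (Y i x) - g i (Y i y))"
        using apos[OF i] by simp
      also have "\<dots> \<le> \<alpha> i * (L i * norm (Y i x - Y i y))"
        using apos[OF i] lipi[OF i] by (intro mult_left_mono) auto
      also have "\<dots> = (\<alpha> i)\<^sup>2 * L i * norm (x - y)"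
        using apos[OF i] by (simp add: YD power2_eq_square)
      finally show "norm (\<alpha> i *\<^sub>R (g i (Y i x) - g i (Y i y))) \<le> (\<alpha> i)\<^sup>2 * L i * norm (x - y)" .
    qed (use nR in simp)
    also have "\<dots> = La * norm (x - y)"
      by (simp add: La_def sum_distrib_right)
    finally show "norm (Gt x - Gt y) \<le> La * norm (x - y)" .
  qed
  have sct: "\<forall>x y. ftil x \<ge> ftil y + Gt y \<bullet> (x - y) + mua / 2 * (norm (x - y))\<^sup>2"
  proof (intro allI)
    fix x y
    have "(\<Sum>i<n. f i (Y i y) + \<alpha> i * (g i (Y i y) \<bullet> (x - y)) + (\<alpha> i)\<^sup>2 * \<mu> i / 2 * (norm (x - y))\<^sup>2)
          \<le> (\<Sum>i<n. f i (Y i x))"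
    proof (rule sum_mono)
      fix i assume "i \<in> {..<n}"
      then have i: "i < n" by simp
      have "f i (Y i x) \<ge> f i (Y i y) + g i (Y i y) \<bullet> (Y i x - Y i y) + \<mu> i / 2 * (norm (Y i x - Y i y))\<^sup>2"
        using sci[OF i] by blast
      then show "f i (Y i y) + \<alpha> i * (g i (Y i y) \<bullet> (x - y)) + (\<alpha> i)\<^sup>2 * \<mu> i / 2 * (norm (x - y))\<^sup>2 \<le> f i (Y i x)"
        using apos[OF i] by (simp add: YD power_mult_distrib mult_ac)
    qed
    then have "(1 / real n) * (\<Sum>i<n. f i (Y i y) + \<alpha> i * (g i (Y i y) \<bullet> (x - y)) + (\<alpha> i)\<^sup>2 * \<mu> i / 2 * (norm (x - y))\<^sup>2)
          \<le> ftil x" unfolding ftilY using nR by (intro mult_left_mono) auto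
    moreover have "(1 / real n) * (\<Sum>i<n. f i (Y i y) + \<alpha> i * (g i (Y i y) \<bullet> (x - y)) + (\<alpha> i)\<^sup>2 * \<mu> i / 2 * (norm (x - y))\<^sup>2)
      = ftil y + Gt y \<bullet> (x - y) + mua / 2 * (norm (x - y))\<^sup>2"
    proof -
      have hB: "(\<Sum>i<n. \<alpha> i * (g i (Y i y) \<bullet> (x - y))) = (\<Sum>i<n. \<alpha> i *\<^sub>R g i (Y i y)) \<bullet> (x - y)"
        by (simp add: inner_sum_left)
      have hC: "(\<Sum>i<n. (\<alpha> i)\<^sup>2 * \<mu> i / 2 * (norm (x - y))\<^sup>2) = (\<Sum>i<n. (\<alpha> i)\<^sup>2 * \<mu> i) / 2 * (norm (x - y))\<^sup>2"
        by (simp add: sum_distrib_right sum_divide_distrib)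
      show ?thesis unfolding sum.distrib hB hC ftilY Gt_def mua_def
        by (simp add: algebra_simps)
    qed
    ultimately show "ftil x \<ge> ftil y + Gt y \<bullet> (x - y) + mua / 2 * (norm (x - y))\<^sup>2" by simp
  qed
  have stepG: "xk (Suc k) = xk k - (1 / La) *\<^sub>R Gt (xk k)" for k
    unfolding step Gt_def gamma_def Y_def by simp
  define c where "c = 1 - mua / La"
  define e where "e = (\<lambda>k. ftil (xk k) - (INF x. ftil x))"
  have c_nn: "c \<ge> 0" unfolding c_def using mua_le La_pos by simp
  have e_step: "e (Suc k) \<le> c * e k" for k
    unfolding e_def c_def stepG by (rule gd_step[OF gradt lipt sct La_pos mua_pos])
  have e_K: "e k \<le> c ^ k * e 0" for k
  proof (induction k)
    case (Suc k)
    have "e (Suc k) \<le> c * e k" by (rule e_step)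
    also have "\<dots> \<le> c * (c ^ k * e 0)" using Suc c_nn by (intro mult_left_mono)
    finally show ?case by simp
  qed simp
  have gzero: "g i (xs i) = 0" if i: "i < n" for i
  proof -
    have "(f i has_derivative (\<lambda>h. g i (xs i) \<bullet> h)) (at (xs i))"
      using gradi[OF i] unfolding is_gradient_def by blast
    then have "(\<lambda>h. g i (xs i) \<bullet> h) = (\<lambda>h. 0)"
      by (rule has_derivative_local_min) (use minimizer[OF i] in simp)
    then have "g i (xs i) \<bullet> g i (xs i) = 0" by meson
    then show ?thesis by simp
  qed
  have wL: "La * w i = (\<alpha> i)\<^sup>2 * L i / real n" for i
    using La_pos nR unfolding w_def by (simp add: field_simps)
  have e0: "e 0 \<le> La * V / 2"
  proof -
    have inf: "(1 / real n) * (\<Sum>i<n. f i (xs i)) \<le> (INF x. ftil x)"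
    proof (rule cINF_greatest)
      fix x
      show "(1 / real n) * (\<Sum>i<n. f i (xs i)) \<le> ftil x"
        unfolding ftilY using nR by (intro mult_left_mono sum_mono minimizer) auto
    qed simp
    have each: "f i (Y i xavg) - f i (xs i) \<le> (\<alpha> i)\<^sup>2 * L i / 2 * (norm (xs i - xavg))\<^sup>2" if i: "i < n" for i
    proof -
      have "f i (Y i xavg) \<le> f i (xs i) + g i (xs i) \<bullet> (Y i xavg - xs i) + L i / 2 * (norm (Y i xavg - xs i))\<^sup>2"
        by (rule descent[OF gradi[OF i] lipi[OF i]])
      moreover have "Y i xavg - xs i = \<alpha> i *\<^sub>R (xavg - xs i)"
        by (simp add: Y_def algebra_simps)
      moreover have "norm (xavg - xs i) = norm (xs i - xavg)" by (rule norm_minus_commute)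
      ultimately show ?thesis using gzero[OF i] apos[OF i]
        by (simp add: power_mult_distrib mult_ac)
    qed
    have "e 0 \<le> ftil xavg - (1 / real n) * (\<Sum>i<n. f i (xs i))"
      unfolding e_def x0 using inf by simp
    also have "\<dots> = (1 / real n) * (\<Sum>i<n. f i (Y i xavg) - f i (xs i))"
      unfolding ftilY by (simp add: sum_subtractf right_diff_distrib)
    also have "\<dots> \<le> (1 / real n) * (\<Sum>i<n. (\<alpha> i)\<^sup>2 * L i / 2 * (norm (xs i - xavg))\<^sup>2)"
      using nR each by (intro mult_left_mono sum_mono) auto
    also have "\<dots> = (\<Sum>i<n. La * w i * (norm (xs i - xavg))\<^sup>2) / 2"
      unfolding wL by (simp add: sum_divide_distrib sum_distrib_left)
    also have "\<dots> = La * V / 2"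
      unfolding V_def by (simp add: sum_distrib_left mult_ac)
    finally show ?thesis .
  qed
  have w_nn: "w i \<ge> 0" if "i < n" for i
    unfolding w_def using La_pos nR Lpos[OF that] by simp
  have w_sum: "(\<Sum>i<n. w i) = 1"
  proof -
    have S: "(\<Sum>i<n. (\<alpha> i)\<^sup>2 * L i) = real n * La" unfolding La_def using nR by simp
    show ?thesis unfolding w_def sum_divide_distrib[symmetric] S using La_pos nR by simp
  qed
  have V_nn: "V \<ge> 0" unfolding V_def using w_nn by (intro sum_nonneg) auto
  have part2: "(\<forall>i<n. \<alpha> i = \<beta>) \<longrightarrow>
           ftil (xk K) - (INF x. ftil x) \<le> (1 - muhat / Lhat) ^ K * (\<beta>\<^sup>2 * Lhat * V / 2)"
  proof
    assume ab: "\<forall>i<n. \<alpha> i = \<beta>"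
    have bpos: "\<beta> > 0" using ab apos[of 0] n_pos by simp
    have La_eq: "La = \<beta>\<^sup>2 * Lhat"
      unfolding La_def Lhat_def using ab by (simp add: sum_distrib_left)
    have mua_eq: "mua = \<beta>\<^sup>2 * muhat"
      unfolding mua_def muhat_def using ab by (simp add: sum_distrib_left)
    have "c = 1 - muhat / Lhat" unfolding c_def La_eq mua_eq using bpos by simp
    then show "ftil (xk K) - (INF x. ftil x) \<le> (1 - muhat / Lhat) ^ K * (\<beta>\<^sup>2 * Lhat * V / 2)"
      using e_K[of K] e0 c_nn La_eq
      by (metis (no_types, lifting) e_def mult_left_mono order_trans zero_le_power)
  qed
  define Sd where "Sd = {(norm (xs i - xs j))\<^sup>2 | i j. i < n \<and> j < n \<and> i \<noteq> j}"
  have finSd: "finite Sd"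
  proof -
    have "Sd \<subseteq> (\<lambda>(i, j). (norm (xs i - xs j))\<^sup>2) ` ({..<n} \<times> {..<n})"
      unfolding Sd_def by auto
    then show ?thesis by (rule finite_subset) auto
  qed
  have D_ge: "(norm (xs i - xs j))\<^sup>2 \<le> D" if "i < n" "j < n" for i j
  proof (cases "i = j")
    case True
    then show ?thesis unfolding D_def using finSd by (intro Max_ge) (auto simp: Sd_def[symmetric])
  next
    case False
    then have "(norm (xs i - xs j))\<^sup>2 \<in> Sd" unfolding Sd_def using that by blast
    then show ?thesis unfolding D_def Sd_def[symmetric] using finSd by (intro Max_ge) auto
  qed
  have D_nn: "D \<ge> 0" using D_ge[of 0 0] n_pos by simp
  have V_le: "V \<le> D"
  proof -
    have "(norm (xs i - xavg))\<^sup>2 \<le> D" if i: "i < n" for i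
    proof -
      have "xs i - xavg = (\<Sum>j<n. w j *\<^sub>R (xs i - xs j))"
        unfolding xavg_def by (simp add: scaleR_diff_right sum_subtractf scaleR_sum_left[symmetric] w_sum)
      then have "norm (xs i - xavg) \<le> (\<Sum>j<n. norm (w j *\<^sub>R (xs i - xs j)))"
        by (metis norm_sum)
      also have "\<dots> \<le> (\<Sum>j<n. w j * sqrt D)"
      proof (rule sum_mono)
        fix j assume "j \<in> {..<n}"
        then have j: "j < n" by simp
        have "norm (xs i - xs j) \<le> sqrt D"
          using D_ge[OF i j] by (simp add: real_le_rsqrt)
        then show "norm (w j *\<^sub>R (xs i - xs j)) \<le> w j * sqrt D"
          using w_nn[OF j] by (simp add: mult_left_mono)
      qed
      also have "\<dots> = sqrt D" by (simp add: sum_distrib_right[symmetric] w_sum)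
      finally have "norm (xs i - xavg) \<le> sqrt D" .
      then have "(norm (xs i - xavg))\<^sup>2 \<le> (sqrt D)\<^sup>2" by (intro power_mono) auto
      then show ?thesis using D_nn by simp
    qed
    then have "V \<le> (\<Sum>i<n. w i * D)" unfolding V_def
      using w_nn by (intro sum_mono mult_left_mono) auto
    also have "\<dots> = D" by (simp add: sum_distrib_right[symmetric] w_sum)
    finally show ?thesis .
  qed
  have amax_ge: "\<alpha> i \<le> amax" if "i < n" for i
    unfolding amax_def using that by (intro Max_ge) auto
  have La_le: "La \<le> amax\<^sup>2 * Lhat"
  proof -
    have "(\<Sum>i<n. (\<alpha> i)\<^sup>2 * L i) \<le> (\<Sum>i<n. amax\<^sup>2 * L i)"
    proof (rule sum_mono)
      fix i assume "i \<in> {..<n}"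
      then have i: "i < n" by simp
      have "(\<alpha> i)\<^sup>2 \<le> amax\<^sup>2" using apos[OF i] amax_ge[OF i] by (intro power_mono) auto
      then show "(\<alpha> i)\<^sup>2 * L i \<le> amax\<^sup>2 * L i" using Lpos[OF i] by (intro mult_right_mono) auto
    qed
    then show ?thesis unfolding La_def Lhat_def using nR
      by (simp add: sum_distrib_left[symmetric] divide_right_mono)
  qed
  have "La * V \<le> amax\<^sup>2 * Lhat * D"
    using La_le V_le V_nn La_pos by (intro mult_mono) auto
  then have e0': "e 0 \<le> amax\<^sup>2 * Lhat * D / 2" using e0 by simp
  have part1: "ftil (xk K) - (INF x. ftil x) \<le> (1 - mua / La) ^ K * (amax\<^sup>2 * Lhat * D / 2)"
    using e_K[of K] e0' c_nn unfolding c_def[symmetric]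
    by (metis (no_types, lifting) e_def mult_left_mono order_trans zero_le_power)
  show ?thesis using part1 part2 by blast
qed

end
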